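(* Let $f$ be a real function infinitely differentiable on a neighborhood of $0$, and write $c_k^f=f^{(k)}(0)$. For $n,k\in\mathbb{N}_0$ define \[ b_{n,k}=\frac{1}{k!}\sum_{i=0}^{k}(-1)^i\binom{k}{i}(k-i)^{\llbracket n\rrbracket},\qquad a_n=\frac{1}{n!}\sum_{k=0}^{n}c_k^f\,b_{n,k}. \] Then the function $\mathcal{A}^{f,D_3}(x)=\sum_{n=0}^{\infty}a_n[\ln(x+1)]^n$ matches all derivatives of $f$ at $0$; precisely, for every $N\in\mathbb{N}_0$, the function $x\mapsto\sum_{n=0}^{N}a_n[\ln(x+1)]^n$ satisfies \[ \frac{d^m}{dx^m}\Big[\sum_{n=0}^{N}a_n[\ln(x+1)]^n\Big]_{x=0}=f^{(m)}(0)\qquad\text{for all }0\le m\le N . \]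
   Context: The generalized exponentiation is defined by $x^{\llbracket y\rrbracket}=1$ if $x=y=0$, and $x^{\llbracket y\rrbracket}=x^y$ otherwise; with this convention $b_{n,k}$ are the Stirling numbers of the second kind, including $b_{0,0}=1$ and $b_{n,0}=0$ for $n>0$. *)

theory Defs
  imports "HOL-Analysis.Analysis"
begin

text \<open>Generalized exponentiation: x^[y] = 1 if x = y = 0, else x^y.
  For natural exponents this coincides with Isabelle's power (0 ^ 0 = 1).\<close>
definition gpow :: "real \<Rightarrow> nat \<Rightarrow> real" where
  "gpow x y = (if x = 0 \<and> y = 0 then 1 else x ^ y)"

definition bcoef :: "nat \<Rightarrow> nat \<Rightarrow> real" where
  "bcoef n k = (1 / fact k) *
     (\<Sum>i=0..k. (-1) ^ i * real (k choose i) * gpow (real (k - i)) n)"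

definition acoef :: "(real \<Rightarrow> real) \<Rightarrow> nat \<Rightarrow> real" where
  "acoef f n = (1 / fact n) * (\<Sum>k=0..n. (deriv ^^ k) f 0 * bcoef n k)"

end

theory Submission
  imports Defs "HOL-Computational_Algebra.Polynomial"
begin


definition sk :: "nat \<Rightarrow> nat \<Rightarrow> real" where
  "sk n k = (\<Sum>i\<le>k. (-1) ^ i * real (k choose i) * real (k - i) ^ n)"

lemma gpow_eq: "gpow x y = x ^ y"
  by (simp add: gpow_def)

lemma bcoef_sk: "bcoef n k = sk n k / fact k"
  by (simp add: bcoef_def sk_def gpow_eq atLeast0AtMost)

lemma sk_0: "k > 0 \<Longrightarrow> sk 0 k = 0"
  unfolding sk_def using choose_alternating_sum[of k, where 'a=real] by simp

lemma sk_rec: "sk (Suc n) (Suc k) = real (Suc k) * (sk n (Suc k) + sk n k)"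
proof -
  have A: "sk (Suc n) (Suc k) = real (Suc k) * (\<Sum>i\<le>k. (-1) ^ i * real (k choose i) * real (Suc k - i) ^ n)"
  proof -
    have "sk (Suc n) (Suc k) = (\<Sum>i\<le>k. (-1) ^ i * real (Suc k choose i) * real (Suc k - i) ^ Suc n)"
      unfolding sk_def by (simp add: sum.atMost_Suc)
    also have "\<dots> = (\<Sum>i\<le>k. real (Suc k) * ((-1) ^ i * real (k choose i) * real (Suc k - i) ^ n))"
    proof (rule sum.cong[OF refl])
      fix i assume "i \<in> {..k}"
      hence i: "i \<le> k" by simp
      have "real (Suc k choose i) * real (Suc k - i) = real (Suc k) * real (k choose i)"
      proof -
        have "(Suc k - i) * (Suc k choose i) = Suc k * (k choose i)"
          using binomial_absorb_comp[of "Suc k" i] by simp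
        thus ?thesis by (metis mult.commute of_nat_mult)
      qed
      note eq = this
      have "(-1) ^ i * real (Suc k choose i) * real (Suc k - i) ^ Suc n =
            (-1) ^ i * (real (Suc k choose i) * real (Suc k - i)) * real (Suc k - i) ^ n"
        by (simp add: mult_ac)
      also have "\<dots> = (-1) ^ i * (real (Suc k) * real (k choose i)) * real (Suc k - i) ^ n"
        by (simp only: eq)
      finally show "(-1) ^ i * real (Suc k choose i) * real (Suc k - i) ^ Suc n =
            real (Suc k) * ((-1) ^ i * real (k choose i) * real (Suc k - i) ^ n)"
        by (simp add: mult_ac)
    qed
    finally show ?thesis by (simp add: sum_distrib_left)
  qed
  have B: "sk n (Suc k) = real (Suc k) ^ n - (\<Sum>j\<le>k. (-1) ^ j * real (k choose Suc j) * real (k - j) ^ n) - sk n k"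
  proof -
    have "sk n (Suc k) = real (Suc k) ^ n + (\<Sum>j\<le>k. (-1) ^ Suc j * real (Suc k choose Suc j) * real (k - j) ^ n)"
      unfolding sk_def by (subst sum.atMost_Suc_shift) simp
    also have "(\<Sum>j\<le>k. (-1) ^ Suc j * real (Suc k choose Suc j) * real (k - j) ^ n)
       = - (\<Sum>j\<le>k. (-1) ^ j * real (k choose Suc j) * real (k - j) ^ n) - sk n k"
      unfolding sk_def by (simp add: sum.distrib[symmetric] sum_negf[symmetric] algebra_simps)
    finally show ?thesis by simp
  qed
  have C: "(\<Sum>i\<le>k. (-1) ^ i * real (k choose i) * real (Suc k - i) ^ n) =
        real (Suc k) ^ n - (\<Sum>j\<le>k. (-1) ^ j * real (k choose Suc j) * real (k - j) ^ n)"
  proof (cases k)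
    case 0 thus ?thesis by simp
  next
    case (Suc k')
    have "(\<Sum>i\<le>k. (-1) ^ i * real (k choose i) * real (Suc k - i) ^ n) =
       real (Suc k) ^ n + (\<Sum>j\<le>k'. (-1) ^ Suc j * real (k choose Suc j) * real (k - j) ^ n)"
      unfolding Suc by (subst sum.atMost_Suc_shift) simp
    also have "(\<Sum>j\<le>k'. (-1) ^ Suc j * real (k choose Suc j) * real (k - j) ^ n)
        = - (\<Sum>j\<le>k. (-1) ^ j * real (k choose Suc j) * real (k - j) ^ n)"
      unfolding Suc by (simp add: sum.atMost_Suc sum_negf[symmetric] binomial_eq_0 del: binomial_Suc_Suc)
    finally show ?thesis by simp
  qed
  show ?thesis using A B C by simp
qed

lemma sk_vanish: "n < k \<Longrightarrow> sk n k = 0"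
proof (induction n arbitrary: k)
  case 0 thus ?case by (simp add: sk_0)
next
  case (Suc n)
  then obtain k' where k: "k = Suc k'" by (cases k) auto
  with Suc show ?case by (simp add: sk_rec)
qed



fun sig :: "nat \<Rightarrow> nat \<Rightarrow> real" where
  "sig 0 n = (if n = 0 then 1 else 0)"
| "sig (Suc m) n = (if n = 0 then 0 else sig m (n - 1)) - real m * sig m n"

lemma sig_vanish: "m < n \<Longrightarrow> sig m n = 0"
  by (induction m arbitrary: n) auto

lemma sig_sum_rec:
  "(\<Sum>n\<le>Suc m. sig (Suc m) n * v n) =
     (\<Sum>n\<le>m. sig m n * v (Suc n)) - real m * (\<Sum>n\<le>m. sig m n * v n)"
proof -
  have "(\<Sum>n\<le>Suc m. sig (Suc m) n * v n) =
     (\<Sum>n\<le>Suc m. (if n = 0 then 0 else sig m (n - 1)) * v n) - real m * (\<Sum>n\<le>Suc m. sig m n * v n)"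
    by (simp add: sum_distrib_left sum_subtractf[symmetric] algebra_simps del: sum.atMost_Suc)
  also have "(\<Sum>n\<le>Suc m. (if n = 0 then 0 else sig m (n - 1)) * v n) = (\<Sum>n\<le>m. sig m n * v (Suc n))"
    by (subst sum.atMost_Suc_shift) simp
  also have "(\<Sum>n\<le>Suc m. sig m n * v n) = (\<Sum>n\<le>m. sig m n * v n)"
    by (simp add: sig_vanish)
  finally show ?thesis .
qed

lemma chain:
  fixes G :: "real \<Rightarrow> real"
  assumes sm: "\<And>n t. (deriv ^^ n) G differentiable (at t)"
  shows "x > -1 \<Longrightarrow> (deriv ^^ m) (\<lambda>x. G (ln (x + 1))) x =
           (\<Sum>n\<le>m. sig m n * (deriv ^^ n) G (ln (x + 1))) / (x + 1) ^ m"
proof (induction m arbitrary: x)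
  case 0 thus ?case by simp
next
  case (Suc m)
  define R where "R = (\<lambda>x. (\<Sum>n\<le>m. sig m n * (deriv ^^ n) G (ln (x + 1))) / (x + 1) ^ m)"
  define S0 where "S0 = (\<Sum>n\<le>m. sig m n * (deriv ^^ n) G (ln (x + 1)))"
  define S1 where "S1 = (\<Sum>n\<le>m. sig m n * (deriv ^^ Suc n) G (ln (x + 1)))"
  have ev: "eventually (\<lambda>y. (deriv ^^ m) (\<lambda>x. G (ln (x + 1))) y = R y) (nhds x)"
    using eventually_nhds_in_open[of "{-1<..}" x] Suc.prems
    by (auto elim!: eventually_mono simp: R_def Suc.IH)
  have dG: "\<And>n t. ((deriv ^^ n) G has_real_derivative (deriv ^^ Suc n) G t) (at t)"
    using sm DERIV_deriv_iff_real_differentiable by simp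
  have dl: "((\<lambda>x. ln (x + 1)) has_real_derivative 1 / (x + 1)) (at x)"
    using Suc.prems by (auto intro!: derivative_eq_intros)
  have dterm: "\<And>n. ((\<lambda>x. (deriv ^^ n) G (ln (x + 1))) has_real_derivative
       (deriv ^^ Suc n) G (ln (x + 1)) * (1 / (x + 1))) (at x)"
    by (rule DERIV_chain2[OF dG dl])
  have dS: "((\<lambda>x. \<Sum>n\<le>m. sig m n * (deriv ^^ n) G (ln (x + 1))) has_real_derivative
       (\<Sum>n\<le>m. sig m n * ((deriv ^^ Suc n) G (ln (x + 1)) * (1 / (x + 1))))) (at x)"
    by (intro DERIV_sum DERIV_cmult dterm)
  have dP: "((\<lambda>x. (x + 1) ^ m) has_real_derivative real m * (x + 1) ^ (m - 1)) (at x)"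
    by (auto intro!: derivative_eq_intros)
  have xp: "x + 1 > 0" using Suc.prems by simp
  have dR: "(R has_real_derivative
     ((S1 / (x + 1)) * (x + 1) ^ m - S0 * (real m * (x + 1) ^ (m - 1))) / ((x + 1) ^ m * (x + 1) ^ m)) (at x)"
  proof -
    have "(\<Sum>n\<le>m. sig m n * ((deriv ^^ Suc n) G (ln (x + 1)) * (1 / (x + 1)))) = S1 / (x + 1)"
      unfolding S1_def by (simp add: sum_divide_distrib)
    thus ?thesis unfolding R_def S0_def using DERIV_divide[OF dS dP] xp by simp
  qed
  have dH: "((deriv ^^ m) (\<lambda>x. G (ln (x + 1))) has_real_derivative
     ((S1 / (x + 1)) * (x + 1) ^ m - S0 * (real m * (x + 1) ^ (m - 1))) / ((x + 1) ^ m * (x + 1) ^ m)) (at x)"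
    using DERIV_cong_ev[OF refl ev refl] dR by simp
  have alg: "((S1 / (x + 1)) * (x + 1) ^ m - S0 * (real m * (x + 1) ^ (m - 1))) / ((x + 1) ^ m * (x + 1) ^ m)
      = (S1 - real m * S0) / (x + 1) ^ Suc m"
  proof (cases m)
    case 0 thus ?thesis using xp by (simp add: field_simps)
  next
    case (Suc m')
    define y where "y = x + 1"
    have y: "y > 0" using xp y_def by simp
    have e1: "(S1 / y) * y ^ m = y ^ m' * S1" unfolding Suc using y by (simp add: field_simps)
    have e2: "S0 * (real m * y ^ (m - 1)) = y ^ m' * (real m * S0)" unfolding Suc by simp
    have e3: "y ^ m * y ^ m = y ^ m' * y ^ Suc m" unfolding Suc by simp
    have "((S1 / y) * y ^ m - S0 * (real m * y ^ (m - 1))) / (y ^ m * y ^ m)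
        = (y ^ m' * (S1 - real m * S0)) / (y ^ m' * y ^ Suc m)"
      unfolding e1 e2 e3 by (simp add: algebra_simps)
    also have "\<dots> = (S1 - real m * S0) / y ^ Suc m" using y by simp
    finally show ?thesis unfolding y_def .
  qed
  have "(deriv ^^ Suc m) (\<lambda>x. G (ln (x + 1))) x = (S1 - real m * S0) / (x + 1) ^ Suc m"
    using DERIV_imp_deriv[OF dH] alg by simp
  also have "S1 - real m * S0 = (\<Sum>n\<le>Suc m. sig (Suc m) n * (deriv ^^ n) G (ln (x + 1)))"
    unfolding S1_def S0_def by (subst sig_sum_rec[where v = "\<lambda>n. (deriv ^^ n) G (ln (x + 1))"]) simp
  finally show ?case .
qed

lemma exp_comb_deriv:
  fixes w r :: "'a \<Rightarrow> real"
  assumes "finite A"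
  shows "(deriv ^^ n) (\<lambda>t. \<Sum>p\<in>A. w p * exp (r p * t)) = (\<lambda>t. \<Sum>p\<in>A. w p * r p ^ n * exp (r p * t))"
proof (induction n)
  case 0 thus ?case by simp
next
  case (Suc n)
  show ?case
  proof
    fix t
    have "((\<lambda>t. \<Sum>p\<in>A. w p * r p ^ n * exp (r p * t)) has_real_derivative
            (\<Sum>p\<in>A. w p * r p ^ n * (exp (r p * t) * r p))) (at t)"
      by (intro DERIV_sum DERIV_cmult) (auto intro!: derivative_eq_intros)
    hence "deriv (\<lambda>t. \<Sum>p\<in>A. w p * r p ^ n * exp (r p * t)) t = (\<Sum>p\<in>A. w p * r p ^ Suc n * exp (r p * t))"
      by (subst DERIV_imp_deriv) (auto simp: algebra_simps)
    thus "(deriv ^^ Suc n) (\<lambda>t. \<Sum>p\<in>A. w p * exp (r p * t)) t = (\<Sum>p\<in>A. w p * r p ^ Suc n * exp (r p * t))"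
      using Suc by simp
  qed
qed

lemma exp_comb_smooth:
  fixes w r :: "'a \<Rightarrow> real"
  assumes "finite A"
  shows "(deriv ^^ n) (\<lambda>t. \<Sum>p\<in>A. w p * exp (r p * t)) differentiable (at t)"
proof -
  have "\<And>p. ((\<lambda>x. exp (r p * x)) has_real_derivative exp (r p * t) * r p) (at t)"
    by (auto intro!: derivative_eq_intros)
  hence d: "\<And>p. (\<lambda>x. exp (r p * x)) differentiable (at t)"
    using differentiableI[OF has_field_derivative_imp_has_derivative] by blast
  show ?thesis unfolding exp_comb_deriv[OF assms]
    using assms d by (intro differentiable_sum ballI differentiable_mult differentiable_const) auto
qed

lemma poly_higher_deriv: "(deriv ^^ n) (poly (p :: real poly)) = poly ((pderiv ^^ n) p)"
proof (induction n)
  case 0 thus ?case by simp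
next
  case (Suc n)
  show ?case by (rule ext) (simp add: Suc DERIV_imp_deriv[OF poly_DERIV])
qed

lemma poly_smooth: "(deriv ^^ n) (poly (p :: real poly)) differentiable (at t)"
  unfolding poly_higher_deriv using poly_DERIV real_differentiable_def by blast

lemma poly_higher_deriv_0: "(deriv ^^ n) (poly (p :: real poly)) 0 = fact n * coeff p n"
  by (simp add: poly_higher_deriv poly_0_coeff_0 coeff_higher_pderiv pochhammer_fact)



theorem proposition4:
  fixes f :: "real \<Rightarrow> real"
  assumes smooth: "\<exists>S. open S \<and> 0 \<in> S \<and>
                     (\<forall>k. \<forall>x\<in>S. (deriv ^^ k) f differentiable (at x))"
  shows "\<forall>N m. m \<le> N \<longrightarrow>
           (deriv ^^ m) (\<lambda>x. \<Sum>n=0..N. acoef f n * (ln (x + 1)) ^ n) 0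
             = (deriv ^^ m) f 0"
proof (intro allI impI)
  fix N m :: nat assume mN: "m \<le> N"
  define c where "c = (\<lambda>k. (deriv ^^ k) f 0)"
  define a where "a = acoef f"
  define P where "P = (\<Sum>n=0..N. monom (a n) n)"
  define Pc where "Pc = (\<Sum>k=0..N. monom (c k / fact k) k)"
  define A where "A = Sigma {0..N} (\<lambda>k. {0..k})"
  define w where "w = (\<lambda>(k, i). c k / fact k * (-1) ^ i * real (k choose i))"
  define r where "r = (\<lambda>(k::nat, i::nat). real (k - i))"
  define G where "G = (\<lambda>t. \<Sum>p\<in>A. w p * exp (r p * t))"
  have finA: "finite A" unfolding A_def by simp
  have coeffP: "\<And>n. coeff P n = (if n \<le> N then a n else 0)"
    unfolding P_def by (simp add: coeff_sum coeff_monom)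
  have coeffPc: "\<And>n. coeff Pc n = (if n \<le> N then c n / fact n else 0)"
    unfolding Pc_def by (simp add: coeff_sum coeff_monom)
  have fun_eq: "(\<lambda>x. \<Sum>n=0..N. acoef f n * (ln (x + 1)) ^ n) = (\<lambda>x. poly P (ln (x + 1)))"
    unfolding P_def a_def by (simp add: poly_sum poly_monom)
  have G_eq: "\<And>t. G t = (\<Sum>k=0..N. c k / fact k * (exp t - 1) ^ k)"
  proof -
    fix t
    have "G t = (\<Sum>k=0..N. \<Sum>i=0..k. w (k, i) * exp (r (k, i) * t))"
      unfolding G_def A_def by (simp add: sum.Sigma)
    also have "\<dots> = (\<Sum>k=0..N. c k / fact k * (exp t - 1) ^ k)"
    proof (rule sum.cong[OF refl])
      fix k
      have "(exp t - 1) ^ k = (-1 + exp t) ^ k" by simp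
      also have "\<dots> = (\<Sum>i\<le>k. real (k choose i) * (-1) ^ i * exp t ^ (k - i))"
        by (rule binomial_ring)
      also have "\<dots> = (\<Sum>i=0..k. real (k choose i) * (-1) ^ i * exp (r (k, i) * t))"
        unfolding atLeast0AtMost r_def by (intro sum.cong refl) (simp only: case_prod_conv exp_of_nat_mult)
      finally show "(\<Sum>i=0..k. w (k, i) * exp (r (k, i) * t)) = c k / fact k * (exp t - 1) ^ k"
        by (simp add: w_def sum_distrib_left mult_ac)
    qed
    finally show "G t = (\<Sum>k=0..N. c k / fact k * (exp t - 1) ^ k)" .
  qed
  have GL: "\<And>x. x > -1 \<Longrightarrow> G (ln (x + 1)) = poly Pc x"
    unfolding G_eq Pc_def by (simp add: poly_sum poly_monom mult_ac)
  have ev: "eventually (\<lambda>x. G (ln (x + 1)) = poly Pc x) (nhds 0)"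
  proof -
    have "eventually (\<lambda>x. x \<in> {-1<..}) (nhds (0::real))"
      by (rule eventually_nhds_in_open) auto
    thus ?thesis by (rule eventually_mono) (simp add: GL)
  qed
  have LHS_G: "(deriv ^^ m) (\<lambda>x. G (ln (x + 1))) 0 = c m"
  proof -
    have "(deriv ^^ m) (\<lambda>x. G (ln (x + 1))) 0 = (deriv ^^ m) (poly Pc) 0"
      by (rule higher_deriv_cong_ev[OF ev refl])
    also have "\<dots> = c m" using mN by (simp add: poly_higher_deriv_0 coeffPc)
    finally show ?thesis .
  qed
  have smG: "\<And>n t. (deriv ^^ n) G differentiable (at t)"
    unfolding G_def using exp_comb_smooth[OF finA] by blast
  have smg: "\<And>n t. (deriv ^^ n) (poly P) differentiable (at t)"
    by (rule poly_smooth)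
  have chG: "(deriv ^^ m) (\<lambda>x. G (ln (x + 1))) 0 = (\<Sum>n\<le>m. sig m n * (deriv ^^ n) G 0)"
    using chain[OF smG, of 0 m] by simp
  have chg: "(deriv ^^ m) (\<lambda>x. poly P (ln (x + 1))) 0 = (\<Sum>n\<le>m. sig m n * (deriv ^^ n) (poly P) 0)"
    using chain[OF smg, of 0 m] by simp
  have same: "\<And>n. n \<le> N \<Longrightarrow> (deriv ^^ n) G 0 = (deriv ^^ n) (poly P) 0"
  proof -
    fix n assume nN: "n \<le> N"
    have "(deriv ^^ n) G 0 = (\<Sum>p\<in>A. w p * r p ^ n)"
      unfolding G_def exp_comb_deriv[OF finA] by simp
    also have "\<dots> = (\<Sum>k=0..N. \<Sum>i=0..k. w (k, i) * r (k, i) ^ n)"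
      unfolding A_def by (simp add: sum.Sigma)
    also have "\<dots> = (\<Sum>k=0..N. c k * (sk n k / fact k))"
      by (rule sum.cong[OF refl])
         (simp add: w_def r_def sk_def atLeast0AtMost sum_distrib_left sum_divide_distrib mult_ac)
    also have "\<dots> = (\<Sum>k=0..n. c k * (sk n k / fact k))"
      by (rule sum.mono_neutral_right) (use nN in \<open>auto simp: sk_vanish\<close>)
    also have "\<dots> = fact n * a n"
      unfolding a_def acoef_def c_def by (simp add: bcoef_sk)
    also have "\<dots> = (deriv ^^ n) (poly P) 0"
      using nN by (simp add: poly_higher_deriv_0 coeffP)
    finally show "(deriv ^^ n) G 0 = (deriv ^^ n) (poly P) 0" .
  qed
  have "(deriv ^^ m) (\<lambda>x. poly P (ln (x + 1))) 0 = (deriv ^^ m) (\<lambda>x. G (ln (x + 1))) 0"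
    unfolding chg chG using mN same by (intro sum.cong) auto
  thus "(deriv ^^ m) (\<lambda>x. \<Sum>n=0..N. acoef f n * (ln (x + 1)) ^ n) 0 = (deriv ^^ m) f 0"
    unfolding fun_eq LHS_G c_def .
qed

end
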